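(* Assume (H1) and (H2), and suppose that the limit $$b=\lim_{z\to\infty}q'(z)\int_z^\infty\frac{dx}{q(x)}$$ exists in $\mathbb R$. Then $b\ge0$, $$\lim_{z\to\infty}\frac{q'(z)}{q(z)}\sqrt{\int_z^\infty\frac{dx}{q(x)}}=0,$$ and $$\lim_{z\to\infty}\frac{\int_z^\infty q(x)^{-1}dx}{q(z)^2\int_z^\infty q(x)^{-3}dx}=2b+1.$$
   Context: Let $q\in C^1([0,\infty))$ and $\gamma(y)=2\int_0^yq$. (H1): $\int_0^\infty e^{\gamma(y)}\int_y^\infty e^{-\gamma(\xi)}d\xi\,dy<\infty$. (H2): $\lim_{x\to\infty}q(x)=\infty$ and $\lim_{x\to\infty}q'(x)/q(x)^2=0$. (Under (H1),(H2), $\int_z^\infty q^{-1}<\infty$ for large $z$.) *)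

theory Defs
  imports "HOL-Analysis.Analysis"
begin

definition gam :: "(real \<Rightarrow> real) \<Rightarrow> real \<Rightarrow> real" where
  "gam q y = 2 * integral {0..y} q"

definition tail_int :: "(real \<Rightarrow> real) \<Rightarrow> real \<Rightarrow> real" where
  "tail_int f z = (LINT x:{z..}|lborel. f x)"

end

theory Submission
  imports Defs
begin

lemma lhopital_at_top_0:
  fixes f g f' g' :: "real \<Rightarrow> real"
  assumes f0: "(f \<longlongrightarrow> 0) at_top" and g0: "(g \<longlongrightarrow> 0) at_top"
    and gnz: "eventually (\<lambda>x. g x \<noteq> 0) at_top"
    and g'nz: "eventually (\<lambda>x. g' x \<noteq> 0) at_top"
    and Df: "eventually (\<lambda>x. DERIV f x :> f' x) at_top"
    and Dg: "eventually (\<lambda>x. DERIV g x :> g' x) at_top"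
    and lim: "((\<lambda> x. (f' x / g' x)) \<longlongrightarrow> y) at_top"
  shows "((\<lambda> x. f x / g x) \<longlongrightarrow> y) at_top"
  unfolding filterlim_at_top_to_right
proof (rule lhopital_right_0)
  let ?F = "\<lambda>x. f (inverse x)"
  let ?G = "\<lambda>x. g (inverse x)"
  let ?R = "at_right (0::real)"
  let ?D = "\<lambda>f' x. f' (inverse x) * - (inverse x ^ Suc (Suc 0))"
  show "(?F \<longlongrightarrow> 0) ?R" using f0 unfolding filterlim_at_top_to_right .
  show "(?G \<longlongrightarrow> 0) ?R" using g0 unfolding filterlim_at_top_to_right .
  show "eventually (\<lambda>x. ?G x \<noteq> 0) ?R"
    unfolding eventually_at_right_to_top
    using gnz eventually_gt_at_top[where c=0] by eventually_elim simp
  show "eventually (\<lambda>x. DERIV ?G x  :> ?D g' x) ?R"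
    unfolding eventually_at_right_to_top
    using Dg eventually_ge_at_top[where c=1]
    by eventually_elim (rule derivative_eq_intros DERIV_chain'[where f=inverse] | simp)+
  show "eventually (\<lambda>x. DERIV ?F x  :> ?D f' x) ?R"
    unfolding eventually_at_right_to_top
    using Df eventually_ge_at_top[where c=1]
    by eventually_elim (rule derivative_eq_intros DERIV_chain'[where f=inverse] | simp)+
  show "eventually (\<lambda>x. ?D g' x \<noteq> 0) ?R"
    unfolding eventually_at_right_to_top
    using g'nz eventually_ge_at_top[where c=1]
    by eventually_elim auto
  show "((\<lambda>x. ?D f' x / ?D g' x) \<longlongrightarrow> y) ?R"
    unfolding filterlim_at_right_to_top
    apply (intro filterlim_cong[THEN iffD2, OF refl refl _ lim])
    using eventually_ge_at_top[where c=1]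
    by eventually_elim simp
qed

lemma tail_basic:
  fixes f :: "real \<Rightarrow> real"
  assumes cf: "continuous_on {a..} f" and nn: "\<And>x. x \<ge> a \<Longrightarrow> f x \<ge> 0"
    and fin: "(\<integral>\<^sup>+ x\<in>{a..}. ennreal (f x) \<partial>lborel) < \<infinity>"
  shows "set_integrable lborel {a..} f"
proof -
  have m: "(\<lambda>x. indicator {a..} x *\<^sub>R f x) \<in> borel_measurable borel"
    by (rule borel_measurable_continuous_on_indicator) (auto intro: cf)
  have eq: "(\<integral>\<^sup>+ x. ennreal (indicator {a..} x *\<^sub>R f x) \<partial>lborel) = (\<integral>\<^sup>+ x\<in>{a..}. ennreal (f x) \<partial>lborel)"
    by (intro nn_integral_cong) (auto split: split_indicator)
  obtain r where r: "(\<integral>\<^sup>+ x\<in>{a..}. ennreal (f x) \<partial>lborel) = ennreal r"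
    using fin by (metis infinity_ennreal_def less_top_ennreal)
  show ?thesis unfolding set_integrable_def
    apply (rule integrableI_nn_integral_finite[where x=r])
    using m apply simp
    apply (rule AE_I2) using nn apply (simp split: split_indicator)
    using eq r by simp
qed

lemma q_deriv_at:
  assumes deriv: "\<And>x. x \<ge> 0 \<Longrightarrow> (q has_real_derivative q' x) (at x within {0..})"
    and x: "x > 0"
  shows "(q has_real_derivative q' x) (at x)"
proof -
  have "(q has_real_derivative q' x) (at x within {0<..})"
  proof -
    have sub: "{0<..} \<subseteq> {0::real..}" by auto
    have d0: "(q has_real_derivative q' x) (at x within {0..})" using deriv x by simp
    show ?thesis by (rule DERIV_subset[OF d0 sub])
  qed
  moreover have "at x within {0<..} = at x"
    by (rule at_within_open) (use x in simp_all)
  ultimately show ?thesis by simp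
qed

lemma q_cont:
  assumes deriv: "\<And>x. x \<ge> 0 \<Longrightarrow> (q has_real_derivative q' x) (at x within {0..})"
  shows "continuous_on {0..} q"
  unfolding continuous_on_eq_continuous_within
proof
  fix x :: real assume "x \<in> {0..}"
  thus "continuous (at x within {0..}) q" using deriv[of x] by (intro DERIV_continuous) auto
qed

lemma tail_props:
  fixes f :: "real \<Rightarrow> real"
  assumes cf: "continuous_on {a..} f"
    and si: "set_integrable lborel {a..} f"
  shows "\<And>z. z \<ge> a \<Longrightarrow> f integrable_on {z..} \<and> tail_int f z = integral {z..} f
              \<and> tail_int f z = tail_int f a - integral {a..z} f"
    and "(tail_int f \<longlongrightarrow> 0) at_top"
    and "\<And>z. z > a \<Longrightarrow> (tail_int f has_real_derivative - f z) (at z)"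
proof -
  have A: "f integrable_on {z..} \<and> tail_int f z = integral {z..} f" if z: "z \<ge> a" for z
  proof -
    have "set_integrable lborel {z..} f"
      by (rule set_integrable_subset[OF si]) (use z in auto)
    from set_borel_integral_eq_integral[OF this] show ?thesis
      unfolding tail_int_def by simp
  qed
  have B: "tail_int f z = tail_int f a - integral {a..z} f" if z: "z \<ge> a" for z
  proof -
    have i1: "(f has_integral integral {a..z} f) {a..z}"
      by (rule integrable_integral, rule integrable_continuous_interval)
         (rule continuous_on_subset[OF cf], auto)
    have i2: "(f has_integral integral {z..} f) {z..}"
      using A[OF z] by (simp add: integrable_integral)
    have "negligible ({a..z} \<inter> {z..})" using z by simp
    have "(f has_integral (integral {a..z} f + integral {z..} f)) {a..}"
    proof -
      have "{a..z} \<union> {z..} = {a..}" using z by auto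
      thus ?thesis using has_integral_Un[OF i1 i2 \<open>negligible ({a..z} \<inter> {z..})\<close>] by simp
    qed
    hence "integral {a..} f = integral {a..z} f + integral {z..} f"
      by (simp add: integral_unique)
    thus ?thesis using A[OF z] A[of a] by simp
  qed
  show "\<And>z. z \<ge> a \<Longrightarrow> f integrable_on {z..} \<and> tail_int f z = integral {z..} f
              \<and> tail_int f z = tail_int f a - integral {a..z} f"
    using A B by blast
  have L: "((\<lambda>b. set_lebesgue_integral lborel {a..b} f) \<longlongrightarrow> set_lebesgue_integral lborel {a..} f) at_top"
    by (rule tendsto_set_lebesgue_integral_at_top[OF _ si]) auto
  have "((\<lambda>b. integral {a..b} f) \<longlongrightarrow> tail_int f a) at_top"
  proof (rule Lim_transform_eventually[OF L[folded tail_int_def]])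
    show "\<forall>\<^sub>F x in at_top. set_lebesgue_integral lborel {a..x} f = integral {a..x} f"
      using eventually_ge_at_top[of a]
    proof eventually_elim
      case (elim x)
      have "set_integrable lborel {a..x} f"
        by (rule set_integrable_subset[OF si]) auto
      from set_borel_integral_eq_integral(2)[OF this] show ?case by simp
    qed
  qed
  hence "((\<lambda>b. tail_int f a - integral {a..b} f) \<longlongrightarrow> tail_int f a - tail_int f a) at_top"
    by (intro tendsto_intros)
  hence "((\<lambda>b. tail_int f a - integral {a..b} f) \<longlongrightarrow> 0) at_top" by simp
  thus "(tail_int f \<longlongrightarrow> 0) at_top"
  proof (rule Lim_transform_eventually)
    show "\<forall>\<^sub>F x in at_top. tail_int f a - integral {a..x} f = tail_int f x"
      using eventually_ge_at_top[of a] by eventually_elim (rule B[symmetric])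
  qed
  fix z assume z: "z > a"
  have "((\<lambda>x. integral {a..x} f) has_real_derivative f z) (at z within {a..z+1})"
    by (rule integral_has_real_derivative) (use z in \<open>auto intro: continuous_on_subset[OF cf]\<close>)
  hence d: "((\<lambda>x. integral {a..x} f) has_real_derivative f z) (at z)"
    using z by (simp add: at_within_Icc_at)
  have d2: "((\<lambda>x. tail_int f a - integral {a..x} f) has_real_derivative - f z) (at z)"
    using DERIV_diff[OF DERIV_const d] by simp
  have ev: "eventually (\<lambda>x. x \<in> {a<..}) (nhds z)"
    by (rule eventually_nhds_in_open) (use z in auto)
  have ev2: "\<forall>\<^sub>F x in nhds z. tail_int f a - integral {a..x} f = tail_int f x"
    using ev
  proof eventually_elim
    case (elim x)
    hence "a \<le> x" by simp
    thus ?case by (rule B[symmetric])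
  qed
  show "(tail_int f has_real_derivative - f z) (at z)"
    by (rule DERIV_cong_ev[THEN iffD1, OF refl ev2 refl d2])
qed

lemma keyA:
  assumes deriv: "\<And>x. x \<ge> 0 \<Longrightarrow> (q has_real_derivative q' x) (at x within {0..})"
    and a: "0 < a" and eps: "0 < e"
    and hq: "\<And>x. x \<ge> a \<Longrightarrow> 1 \<le> q x \<and> q' x / (q x)^2 \<le> e"
    and y: "a \<le> y" "y \<le> t" "t \<le> y + 1/(2*e*q y)"
  shows "1/(2*q y) \<le> 1/q t"
proof -
  define h where "h = (\<lambda>x. 1 / q x + e*x)"
  have hyt: "h y \<le> h t"
  proof (rule DERIV_nonneg_imp_nondecreasing[where f=h, OF y(2)])
    fix x assume x: "y \<le> x" "x \<le> t"
    have qx: "1 \<le> q x" and qd: "q' x / (q x)^2 \<le> e" using hq[of x] x y by auto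
    have dq: "DERIV q x :> q' x" using q_deriv_at[OF deriv, of x] x y a by simp
    have d0: "DERIV (\<lambda>x. inverse (q x)) x :> - (q' x * inverse (q x ^ Suc (Suc 0)))"
      by (rule DERIV_inverse_fun[OF dq]) (use qx in simp)
    have d1: "DERIV (\<lambda>x. 1 / q x) x :> - (q' x / (q x)^2)"
      using d0 by (simp add: inverse_eq_divide power2_eq_square)
    have d2: "DERIV h x :> - (q' x / (q x)^2) + e"
      unfolding h_def by (rule DERIV_add[OF d1 DERIV_cmult_Id])
    moreover have "0 \<le> - (q' x / (q x)^2) + e"
      using qd by linarith
    ultimately show "\<exists>y. DERIV h x :> y \<and> 0 \<le> y" by blast
  qed
  have qy: "1 \<le> q y" using hq[of y] y by auto
  have m: "e * (t - y) \<le> e * (1/(2*e*q y))"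
    by (rule mult_left_mono) (use y eps in simp_all)
  have m2: "e * (1/(2*e*q y)) = 1/(2*q y)" using eps qy by (simp add: field_simps)
  have i2: "1 / q y = 2 * (1/(2*q y))" by simp
  have hyt': "1/q y + e*y \<le> 1/q t + e*t" using hyt by (simp only: h_def)
  have ed: "e*(t-y) = e*t - e*y" by (simp only: right_diff_distrib)
  show ?thesis using hyt' m m2 i2 ed by linarith
qed

lemma lower_tail:
  fixes f :: "real \<Rightarrow> real"
  assumes fi: "f integrable_on {z..}" and fh: "f integrable_on {z..z+h}"
    and nn: "\<And>x. x \<ge> z \<Longrightarrow> 0 \<le> f x" and h: "0 \<le> h"
    and lb: "\<And>x. z \<le> x \<Longrightarrow> x \<le> z + h \<Longrightarrow> c \<le> f x"
  shows "c * h \<le> integral {z..} f"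
proof -
  have "integral {z..z+h} (\<lambda>_. c) \<le> integral {z..z+h} f"
    by (rule integral_le[OF integrable_const_ivl fh]) (use lb in simp_all)
  also have "\<dots> \<le> integral {z..} f"
    by (rule integral_subset_le[OF _ fh fi]) (use nn in simp_all)
  finally show ?thesis using h by (simp add: mult.commute)
qed

lemma gam_diff:
  assumes qc: "continuous_on {0..} q" and y: "0 \<le> y" "y \<le> t"
  shows "gam q t - gam q y = 2 * integral {y..t} q"
proof -
  have "q integrable_on {0..t}"
    by (rule integrable_continuous_interval, rule continuous_on_subset[OF qc]) auto
  from Henstock_Kurzweil_Integration.integral_combine[OF y this] show ?thesis unfolding gam_def by simp
qed

lemma inner_lower:
  assumes deriv: "\<And>x. x \<ge> 0 \<Longrightarrow> (q has_real_derivative q' x) (at x within {0..})"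
    and a: "0 < a"
    and hq: "\<And>x. x \<ge> a \<Longrightarrow> 1 \<le> q x \<and> q' x / (q x)^2 \<le> 1"
    and y: "a \<le> y"
  shows "ennreal (exp (- gam q y - 2) * (1/(2*q y))) \<le> (\<integral>\<^sup>+ \<xi>\<in>{y..}. ennreal (exp (- gam q \<xi>)) \<partial>lborel)"
proof -
  have qc: "continuous_on {0..} q" by (rule q_cont[OF deriv])
  define h where "h = 1/(2*q y)"
  have qy: "1 \<le> q y" using hq[of y] y by simp
  have h0: "0 \<le> h" unfolding h_def using qy by simp
  have bnd: "exp (- gam q y - 2) \<le> exp (- gam q t)" if t: "y \<le> t" "t \<le> y + h" for t
  proof -
    have qs: "q s \<le> 2 * q y" if s: "s \<in> {y..t}" for s
    proof -
      have k: "1/(2*q y) \<le> 1/q s"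
        by (rule keyA[OF deriv a _ hq, of y s]) (use s t y in \<open>simp_all add: h_def\<close>)
      have "1 \<le> q s" using hq[of s] s y by simp
      with k qy show ?thesis by (simp add: field_simps)
    qed
    have qi: "q integrable_on {y..t}"
      by (rule integrable_continuous_interval, rule continuous_on_subset[OF qc]) (use y a in auto)
    have "integral {y..t} q \<le> integral {y..t} (\<lambda>_. 2 * q y)"
      by (rule integral_le[OF qi integrable_const_ivl]) (use qs in simp)
    also have "\<dots> = (t - y) * (2 * q y)" using t by simp
    also have "\<dots> \<le> h * (2 * q y)"
      by (rule mult_right_mono) (use t qy in simp_all)
    also have "\<dots> = 1" unfolding h_def using qy by simp
    finally have "integral {y..t} q \<le> 1" .
    moreover have "gam q t - gam q y = 2 * integral {y..t} q"
      by (rule gam_diff[OF qc]) (use t y a in simp_all)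
    ultimately have "- gam q y - 2 \<le> - gam q t" by linarith
    thus ?thesis by simp
  qed
  have "(\<integral>\<^sup>+ \<xi>. ennreal (exp (- gam q y - 2)) * indicator {y..y+h} \<xi> \<partial>lborel)
      \<le> (\<integral>\<^sup>+ \<xi>\<in>{y..}. ennreal (exp (- gam q \<xi>)) \<partial>lborel)"
  proof (rule nn_integral_mono)
    fix \<xi>
    show "ennreal (exp (- gam q y - 2)) * indicator {y..y+h} \<xi> \<le> ennreal (exp (- gam q \<xi>)) * indicator {y..} \<xi>"
    proof (cases "\<xi> \<in> {y..y+h}")
      case True
      hence "exp (- gam q y - 2) \<le> exp (- gam q \<xi>)" using bnd by simp
      thus ?thesis using True by (simp add: indicator_def)
    next
      case False
      thus ?thesis by (simp add: indicator_def)
    qed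
  qed
  also have "(\<integral>\<^sup>+ \<xi>. ennreal (exp (- gam q y - 2)) * indicator {y..y+h} \<xi> \<partial>lborel)
      = ennreal (exp (- gam q y - 2)) * ennreal h"
    using h0 by (subst nn_integral_cmult_indicator) simp_all
  also have "\<dots> = ennreal (exp (- gam q y - 2) * (1/(2*q y)))"
    using h0 unfolding h_def by (rule ennreal_mult''[symmetric])
  finally show ?thesis .
qed

lemma H1_int:
  assumes deriv: "\<And>x. x \<ge> 0 \<Longrightarrow> (q has_real_derivative q' x) (at x within {0..})"
    and H1: "(\<integral>\<^sup>+ y\<in>{0..}. ennreal (exp (gam q y)) *
               (\<integral>\<^sup>+ \<xi>\<in>{y..}. ennreal (exp (- gam q \<xi>)) \<partial>lborel) \<partial>lborel) < \<infinity>"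
    and a: "0 < a"
    and hq: "\<And>x. x \<ge> a \<Longrightarrow> 1 \<le> q x \<and> q' x / (q x)^2 \<le> 1"
  shows "(\<integral>\<^sup>+ x\<in>{a..}. ennreal (1 / q x) \<partial>lborel) < \<infinity>"
proof -
  have qc: "continuous_on {0..} q" by (rule q_cont[OF deriv])
  have qca: "continuous_on {a..} (\<lambda>x. 1 / q x)"
  proof (rule continuous_on_divide[OF continuous_on_const])
    show "continuous_on {a..} q" by (rule continuous_on_subset[OF qc]) (use a in auto)
    show "\<forall>x\<in>{a..}. q x \<noteq> 0" using hq by force
  qed
  have m0: "(\<lambda>x. indicator {a..} x *\<^sub>R (1 / q x)) \<in> borel_measurable borel"
    by (rule borel_measurable_continuous_on_indicator) (use qca in auto)
  have m1: "(\<lambda>x. ennreal (indicator {a..} x *\<^sub>R (1 / q x))) \<in> borel_measurable lborel"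
    using m0 by measurable
  have eqm: "(\<lambda>x. ennreal (indicator {a..} x *\<^sub>R (1 / q x))) = (\<lambda>x. ennreal (1 / q x) * indicator {a..} x)"
    by (rule ext) (simp add: indicator_def)
  have m: "(\<lambda>x. ennreal (1 / q x) * indicator {a..} x) \<in> borel_measurable lborel"
    using m1 eqm by simp
  define c where "c = exp (-2) / (2::real)"
  have c0: "0 < c" unfolding c_def by simp
  have "(\<integral>\<^sup>+ x. ennreal c * (ennreal (1 / q x) * indicator {a..} x) \<partial>lborel)
        \<le> (\<integral>\<^sup>+ y\<in>{0..}. ennreal (exp (gam q y)) *
               (\<integral>\<^sup>+ \<xi>\<in>{y..}. ennreal (exp (- gam q \<xi>)) \<partial>lborel) \<partial>lborel)"
  proof (rule nn_integral_mono)
    fix y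
    show "ennreal c * (ennreal (1 / q y) * indicator {a..} y) \<le>
          ennreal (exp (gam q y)) * (\<integral>\<^sup>+ \<xi>\<in>{y..}. ennreal (exp (- gam q \<xi>)) \<partial>lborel) * indicator {0..} y"
    proof (cases "a \<le> y")
      case True
      have qy: "1 \<le> q y" using hq[of y] True by simp
      have e1: "exp (gam q y) * (exp (- gam q y - 2) * (1/(2*q y))) = c * (1 / q y)"
        unfolding c_def by (simp add: exp_diff exp_minus field_simps)
      have "ennreal c * (ennreal (1 / q y) * indicator {a..} y) = ennreal (c * (1 / q y))"
        using True qy ennreal_mult''[of "1 / q y" c] by simp
      also have "\<dots> = ennreal (exp (gam q y)) * ennreal (exp (- gam q y - 2) * (1/(2*q y)))"
        using qy ennreal_mult''[of "exp (- gam q y - 2) * (1/(2*q y))" "exp (gam q y)"] e1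
        by (simp add: mult.commute)
      also have "\<dots> \<le> ennreal (exp (gam q y)) * (\<integral>\<^sup>+ \<xi>\<in>{y..}. ennreal (exp (- gam q \<xi>)) \<partial>lborel)"
        by (rule mult_left_mono[OF inner_lower[OF deriv a hq True]]) (assumption | rule zero_le)+
      also have "\<dots> = ennreal (exp (gam q y)) * (\<integral>\<^sup>+ \<xi>\<in>{y..}. ennreal (exp (- gam q \<xi>)) \<partial>lborel) * indicator {0..} y"
        using True a by simp
      finally show ?thesis .
    next
      case False
      thus ?thesis by simp
    qed
  qed
  also have "\<dots> < \<infinity>" by (rule H1)
  finally have "ennreal c * (\<integral>\<^sup>+ x\<in>{a..}. ennreal (1 / q x) \<partial>lborel) < \<infinity>"
    by (subst (asm) nn_integral_cmult[OF m])
  hence "(\<integral>\<^sup>+ x\<in>{a..}. ennreal (1 / q x) \<partial>lborel) = 0 \<or> (\<integral>\<^sup>+ x\<in>{a..}. ennreal (1 / q x) \<partial>lborel) < top"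
    using c0 by (simp add: ennreal_mult_less_top top_unique)
  thus ?thesis by (metis infinity_ennreal_def ennreal_zero_less_top)
qed

lemma get_a:
  fixes q q' :: "real \<Rightarrow> real"
  assumes H2a: "filterlim q at_top at_top"
    and H2b: "((\<lambda>x. q' x / (q x)\<^sup>2) \<longlongrightarrow> 0) at_top" and e: "0 < e"
  shows "\<exists>a>0. \<forall>x\<ge>a. 1 \<le> q x \<and> q' x / (q x)^2 \<le> e"
proof -
  have e1: "eventually (\<lambda>x. 1 \<le> q x) at_top"
  proof -
    have "\<forall>Z. eventually (\<lambda>x. Z \<le> q x) at_top" by (rule filterlim_at_top[THEN iffD1, OF H2a])
    thus ?thesis by (rule spec)
  qed
  have e2: "eventually (\<lambda>x. q' x / (q x)^2 < e) at_top"
    using order_tendstoD(2)[OF H2b e] .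
  have "eventually (\<lambda>x. 1 \<le> q x \<and> q' x / (q x)^2 \<le> e) at_top"
    using e1 e2 by eventually_elim simp
  then obtain N where N: "\<And>x. x \<ge> N \<Longrightarrow> 1 \<le> q x \<and> q' x / (q x)^2 \<le> e"
    unfolding eventually_at_top_linorder by blast
  show ?thesis
    by (rule exI[of _ "max N 1"]) (use N in simp)
qed

lemma tail_lower_q:
  assumes deriv: "\<And>x. x \<ge> 0 \<Longrightarrow> (q has_real_derivative q' x) (at x within {0..})"
    and a: "0 < a" and eps: "0 < e"
    and hq: "\<And>x. x \<ge> a \<Longrightarrow> 1 \<le> q x \<and> q' x / (q x)^2 \<le> e"
    and z: "a \<le> z" and fi: "(\<lambda>x. 1 / q x) integrable_on {z..}"
  shows "1 / (4 * e * (q z)^2) \<le> integral {z..} (\<lambda>x. 1 / q x)"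
proof -
  have qc: "continuous_on {0..} q" by (rule q_cont[OF deriv])
  define h where "h = 1 / (2 * e * q z)"
  have qz: "1 \<le> q z" using hq[of z] z by simp
  have h0: "0 \<le> h" unfolding h_def using qz eps by simp
  have fh: "(\<lambda>x. 1 / q x) integrable_on {z..z+h}"
  proof (rule integrable_continuous_interval, rule continuous_on_divide[OF continuous_on_const])
    show "continuous_on {z..z+h} q" by (rule continuous_on_subset[OF qc]) (use a z in auto)
    show "\<forall>x\<in>{z..z+h}. q x \<noteq> 0"
    proof
      fix x assume "x \<in> {z..z+h}" hence "a \<le> x" using z by simp
      thus "q x \<noteq> 0" using hq[of x] by simp
    qed
  qed
  have "1 / (2 * q z) * h \<le> integral {z..} (\<lambda>x. 1 / q x)"
  proof (rule lower_tail[OF fi fh _ h0])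
    fix x assume "z \<le> x" thus "0 \<le> 1 / q x" using hq[of x] z by simp
  next
    fix x assume x: "z \<le> x" "x \<le> z + h"
    show "1 / (2 * q z) \<le> 1 / q x"
      by (rule keyA[OF deriv a eps hq z x(1) x(2)[unfolded h_def]])
  qed
  moreover have "1 / (2 * q z) * h = 1 / (4 * e * (q z)^2)"
    unfolding h_def using qz eps by (simp add: field_simps power2_eq_square)
  ultimately show ?thesis by simp
qed

lemma tail_pos_q3:
  assumes deriv: "\<And>x. x \<ge> 0 \<Longrightarrow> (q has_real_derivative q' x) (at x within {0..})"
    and a: "0 < a"
    and hq: "\<And>x. x \<ge> a \<Longrightarrow> 1 \<le> q x \<and> q' x / (q x)^2 \<le> 1"
    and z: "a \<le> z" and fi: "(\<lambda>x. 1 / (q x)^3) integrable_on {z..}"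
  shows "0 < integral {z..} (\<lambda>x. 1 / (q x)^3)"
proof -
  have qc: "continuous_on {0..} q" by (rule q_cont[OF deriv])
  define h where "h = 1 / (2 * 1 * q z)"
  have qz: "1 \<le> q z" using hq[of z] z by simp
  have h0: "0 < h" unfolding h_def using qz by simp
  have fh: "(\<lambda>x. 1 / (q x)^3) integrable_on {z..z+h}"
  proof (rule integrable_continuous_interval, rule continuous_on_divide[OF continuous_on_const])
    show "continuous_on {z..z+h} (\<lambda>x. (q x)^3)"
      by (rule continuous_on_power, rule continuous_on_subset[OF qc]) (use a z in auto)
    show "\<forall>x\<in>{z..z+h}. (q x)^3 \<noteq> 0"
    proof
      fix x assume "x \<in> {z..z+h}" hence "a \<le> x" using z by simp
      thus "(q x)^3 \<noteq> 0" using hq[of x] by simp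
    qed
  qed
  have "(1 / (2 * q z))^3 * h \<le> integral {z..} (\<lambda>x. 1 / (q x)^3)"
  proof (rule lower_tail[OF fi fh _ less_imp_le[OF h0]])
    fix x assume "z \<le> x" thus "0 \<le> 1 / (q x)^3" using hq[of x] z by simp
  next
    fix x assume x: "z \<le> x" "x \<le> z + h"
    have k: "1 / (2 * q z) \<le> 1 / q x"
      by (rule keyA[OF deriv a _ hq z x(1)]) (use x in \<open>simp_all add: h_def\<close>)
    have "(1 / (2 * q z))^3 \<le> (1 / q x)^3"
      by (rule power_mono[OF k]) (use qz in simp)
    thus "(1 / (2 * q z))^3 \<le> 1 / (q x)^3" by (simp add: power_divide)
  qed
  moreover have "0 < (1 / (2 * q z))^3 * h" using qz h0 by simp
  ultimately show ?thesis by linarith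
qed

theorem mainTheorem14:
  fixes q q' :: "real \<Rightarrow> real" and b :: real
  assumes deriv: "\<And>x. x \<ge> 0 \<Longrightarrow> (q has_real_derivative q' x) (at x within {0..})"
    and cont: "continuous_on {0..} q'"
    and H1: "(\<integral>\<^sup>+ y\<in>{0..}. ennreal (exp (gam q y)) *
               (\<integral>\<^sup>+ \<xi>\<in>{y..}. ennreal (exp (- gam q \<xi>)) \<partial>lborel) \<partial>lborel) < \<infinity>"
    and H2a: "filterlim q at_top at_top"
    and H2b: "((\<lambda>x. q' x / (q x)\<^sup>2) \<longlongrightarrow> 0) at_top"
    and lim: "((\<lambda>z. q' z * tail_int (\<lambda>x. 1 / q x) z) \<longlongrightarrow> b) at_top"
  shows "b \<ge> 0
    \<and> ((\<lambda>z. q' z / q z * sqrt (tail_int (\<lambda>x. 1 / q x) z)) \<longlongrightarrow> 0) at_top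
    \<and> ((\<lambda>z. tail_int (\<lambda>x. 1 / q x) z / ((q z)\<^sup>2 * tail_int (\<lambda>x. 1 / (q x) ^ 3) z))
         \<longlongrightarrow> 2 * b + 1) at_top"
proof -
  define F where "F = tail_int (\<lambda>x. 1 / q x)"
  define G where "G = tail_int (\<lambda>x. 1 / (q x) ^ 3)"
  have qc: "continuous_on {0..} q" by (rule q_cont[OF deriv])
  obtain a where a: "0 < a" and hq: "\<And>x. x \<ge> a \<Longrightarrow> 1 \<le> q x \<and> q' x / (q x)^2 \<le> 1"
    using get_a[OF H2a H2b, of 1] by auto
  have qca: "continuous_on {a..} q" by (rule continuous_on_subset[OF qc]) (use a in auto)
  have qnz: "\<forall>x\<in>{a..}. q x \<noteq> 0"
  proof
    fix x assume "x \<in> {a..}" thus "q x \<noteq> 0" using hq[of x] by simp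
  qed
  have q3nz: "\<forall>x\<in>{a..}. (q x)^3 \<noteq> 0"
  proof
    fix x assume "x \<in> {a..}" thus "(q x)^3 \<noteq> 0" using hq[of x] by simp
  qed
  have c1: "continuous_on {a..} (\<lambda>x. 1 / q x)"
    by (rule continuous_on_divide[OF continuous_on_const qca qnz])
  have c3: "continuous_on {a..} (\<lambda>x. 1 / (q x)^3)"
    by (rule continuous_on_divide[OF continuous_on_const continuous_on_power[OF qca] q3nz])
  have fin1: "(\<integral>\<^sup>+ x\<in>{a..}. ennreal (1 / q x) \<partial>lborel) < \<infinity>"
    by (rule H1_int[OF deriv H1 a hq])
  have "(\<integral>\<^sup>+ x\<in>{a..}. ennreal (1 / (q x)^3) \<partial>lborel) \<le> (\<integral>\<^sup>+ x\<in>{a..}. ennreal (1 / q x) \<partial>lborel)"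
  proof (rule nn_integral_mono)
    fix x
    show "ennreal (1 / (q x)^3) * indicator {a..} x \<le> ennreal (1 / q x) * indicator {a..} x"
    proof (cases "a \<le> x")
      case True
      have qx: "1 \<le> q x" using hq[of x] True by simp
      have "q x \<le> (q x)^3"
      proof -
        have "q x * 1 \<le> q x * (q x)^2"
          by (rule mult_left_mono) (use qx in \<open>simp_all add: one_le_power\<close>)
        thus ?thesis by (simp add: power3_eq_cube power2_eq_square)
      qed
      hence "1 / (q x)^3 \<le> 1 / q x" using qx by (intro divide_left_mono) auto
      thus ?thesis using True by (simp add: ennreal_leI)
    next
      case False thus ?thesis by simp
    qed
  qed
  hence fin3: "(\<integral>\<^sup>+ x\<in>{a..}. ennreal (1 / (q x)^3) \<partial>lborel) < \<infinity>"
    using fin1 by (rule le_less_trans)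
  have nn1: "0 \<le> 1 / q x" if "a \<le> x" for x
  proof -
    have "1 \<le> q x" using hq[OF that] by blast
    thus ?thesis by simp
  qed
  have nn3: "0 \<le> 1 / (q x)^3" if "a \<le> x" for x
  proof -
    have "1 \<le> q x" using hq[OF that] by blast
    thus ?thesis by simp
  qed
  have si1: "set_integrable lborel {a..} (\<lambda>x. 1 / q x)"
    by (rule tail_basic[OF c1 nn1 fin1])
  have si3: "set_integrable lborel {a..} (\<lambda>x. 1 / (q x)^3)"
    by (rule tail_basic[OF c3 nn3 fin3])
  note TF = tail_props[OF c1 si1, folded F_def]
  note TG = tail_props[OF c3 si3, folded G_def]
  have Fpos: "0 < F z" if z: "a \<le> z" for z
  proof -
    have "1 / (4 * 1 * (q z)^2) \<le> integral {z..} (\<lambda>x. 1 / q x)"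
      by (rule tail_lower_q[OF deriv a _ hq z]) (use TF(1)[OF z] in simp_all)
    moreover have "0 < 1 / (4 * 1 * (q z)^2)" using hq[of z] z by simp
    ultimately have "0 < integral {z..} (\<lambda>x. 1 / q x)" by linarith
    thus ?thesis using TF(1)[OF z] by simp
  qed
  have Gpos: "0 < G z" if z: "a \<le> z" for z
    using tail_pos_q3[OF deriv a hq z] TG(1)[OF z] by simp
  have dqat: "DERIV q x :> q' x" if "a \<le> x" for x
    using q_deriv_at[OF deriv, of x] that a by simp
  have b0: "b \<ge> 0"
  proof (rule ccontr)
    assume "\<not> b \<ge> 0" hence bn: "b < 0" by simp
    have "eventually (\<lambda>z. q' z * F z < 0) at_top"
      using order_tendstoD(2)[OF lim[folded F_def] bn] .
    hence "eventually (\<lambda>z. a \<le> z \<and> q' z * F z < 0) at_top"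
      using eventually_ge_at_top[of a] by eventually_elim simp
    then obtain N where N: "\<And>z. z \<ge> N \<Longrightarrow> a \<le> z \<and> q' z * F z < 0"
      unfolding eventually_at_top_linorder by blast
    have qneg: "q' z < 0" if "z \<ge> N" for z
    proof -
      have "a \<le> z" "q' z * F z < 0" using N[OF that] by auto
      with Fpos[OF \<open>a \<le> z\<close>] show ?thesis by (simp add: mult_less_0_iff)
    qed
    have qdec: "q z \<le> q N" if z: "z \<ge> N" for z
    proof (rule DERIV_nonpos_imp_nonincreasing[OF z])
      fix x assume x: "N \<le> x" "x \<le> z"
      have "a \<le> x" using N[of x] x by simp
      thus "\<exists>y. DERIV q x :> y \<and> y \<le> 0" using dqat qneg[OF x(1)] by (intro exI[of _ "q' x"]) simp
    qed
    have "\<forall>Z. eventually (\<lambda>x. Z \<le> q x) at_top" by (rule filterlim_at_top[THEN iffD1, OF H2a])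
    hence "eventually (\<lambda>x. q N + 1 \<le> q x) at_top" by (rule spec)
    then obtain M where M: "\<And>x. x \<ge> M \<Longrightarrow> q N + 1 \<le> q x"
      unfolding eventually_at_top_linorder by blast
    have "q N + 1 \<le> q (max M N)" by (rule M) simp
    moreover have "q (max M N) \<le> q N" by (rule qdec) simp
    ultimately show False by simp
  qed
  have q2F: "filterlim (\<lambda>z. (q z)^2 * F z) at_top at_top"
    unfolding filterlim_at_top_gt[where c=0]
  proof (intro allI impI)
    fix Z :: real assume Z: "0 < Z"
    define e where "e = 1 / (4 * Z)"
    have e0: "0 < e" unfolding e_def using Z by simp
    obtain a' where a': "0 < a'" and hq': "\<And>x. x \<ge> a' \<Longrightarrow> 1 \<le> q x \<and> q' x / (q x)^2 \<le> e"
      using get_a[OF H2a H2b e0] by auto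
    show "eventually (\<lambda>z. Z \<le> (q z)^2 * F z) at_top"
      using eventually_ge_at_top[of "max a a'"]
    proof eventually_elim
      case (elim z)
      hence za: "a \<le> z" and za': "a' \<le> z" by auto
      have "1 / (4 * e * (q z)^2) \<le> integral {z..} (\<lambda>x. 1 / q x)"
        by (rule tail_lower_q[OF deriv a' e0 hq' za']) (use TF(1)[OF za] in simp_all)
      hence le: "1 / (4 * e * (q z)^2) \<le> F z" using TF(1)[OF za] by simp
      have qz: "1 \<le> q z" using hq[of z] za by simp
      have "Z = (q z)^2 * (1 / (4 * e * (q z)^2))"
        unfolding e_def using Z qz by (simp add: field_simps)
      also have "\<dots> \<le> (q z)^2 * F z"
        by (rule mult_left_mono[OF le]) simp
      finally show ?case .
    qed
  qed
  have part2: "((\<lambda>z. q' z / q z * sqrt (F z)) \<longlongrightarrow> 0) at_top"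
  proof -
    have s: "filterlim (\<lambda>z. sqrt ((q z)^2 * F z)) at_top at_top"
      by (rule filterlim_compose[OF sqrt_at_top q2F])
    have "((\<lambda>z. (q' z * F z) * inverse (sqrt ((q z)^2 * F z))) \<longlongrightarrow> b * 0) at_top"
      by (rule tendsto_mult[OF lim[folded F_def] tendsto_inverse_0_at_top[OF s]])
    hence l: "((\<lambda>z. (q' z * F z) * inverse (sqrt ((q z)^2 * F z))) \<longlongrightarrow> 0) at_top" by simp
    show ?thesis
    proof (rule Lim_transform_eventually[OF l])
      show "\<forall>\<^sub>F z in at_top. q' z * F z * inverse (sqrt ((q z)^2 * F z)) = q' z / q z * sqrt (F z)"
        using eventually_ge_at_top[of a]
      proof eventually_elim
        case (elim z)
        have qz: "1 \<le> q z" using hq[of z] elim by simp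
        have Fz: "0 < F z" using Fpos[OF elim] .
        have "sqrt ((q z)^2 * F z) = q z * sqrt (F z)"
          using qz by (simp add: real_sqrt_mult)
        moreover have "F z = sqrt (F z) * sqrt (F z)" using Fz by simp
        ultimately show ?case using qz Fz
          by (simp add: field_simps)
      qed
    qed
  qed
  have part3: "((\<lambda>z. F z / (q z)^2 / G z) \<longlongrightarrow> 2 * b + 1) at_top"
  proof (rule lhopital_at_top_0[where f' = "\<lambda>z. (- (1 / q z) * (q z)^2 - F z * (of_nat 2 * (q' z * q z ^ (2 - Suc 0)))) / ((q z)^2 * (q z)^2)"
        and g' = "\<lambda>z. - (1 / (q z)^3)"])
    have q2: "filterlim (\<lambda>z. (q z)^2) at_infinity at_top"
      by (rule filterlim_at_top_imp_at_infinity, rule filterlim_pow_at_top[OF _ H2a]) simp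
    have "((\<lambda>z. F z / (q z)^2) \<longlongrightarrow> 0) at_top"
      by (rule tendsto_divide_0[OF TF(2) q2])
    thus "((\<lambda>z. F z / (q z)^2) \<longlongrightarrow> 0) at_top" .
    show "(G \<longlongrightarrow> 0) at_top" by (rule TG(2))
    show "\<forall>\<^sub>F x in at_top. G x \<noteq> 0"
      using eventually_ge_at_top[of a] by eventually_elim (use Gpos in force)
    show "\<forall>\<^sub>F x in at_top. - (1 / (q x)^3) \<noteq> 0"
      using eventually_ge_at_top[of a] by eventually_elim (use hq in force)
    show "\<forall>\<^sub>F x in at_top. DERIV G x :> - (1 / (q x)^3)"
      using eventually_gt_at_top[of a] by eventually_elim (rule TG(3))
    show "\<forall>\<^sub>F x in at_top. DERIV (\<lambda>z. F z / (q z)^2) x :>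
       (- (1 / q x) * (q x)^2 - F x * (of_nat 2 * (q' x * q x ^ (2 - Suc 0)))) / ((q x)^2 * (q x)^2)"
      using eventually_gt_at_top[of a]
    proof eventually_elim
      case (elim x)
      have x: "a \<le> x" using elim by simp
      have qx: "q x \<noteq> 0" using hq[of x] x by simp
      show ?case
        by (rule DERIV_divide[OF TF(3)[OF elim] DERIV_power[OF dqat[OF x]]]) (use qx in simp)
    qed
    show "((\<lambda>x. ((- (1 / q x) * (q x)^2 - F x * (of_nat 2 * (q' x * q x ^ (2 - Suc 0)))) / ((q x)^2 * (q x)^2))
            / (- (1 / (q x)^3))) \<longlongrightarrow> 2 * b + 1) at_top"
    proof (rule Lim_transform_eventually)
      have "((\<lambda>z. 1 + 2 * (q' z * F z)) \<longlongrightarrow> 1 + 2 * b) at_top"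
        by (intro tendsto_intros lim[folded F_def])
      thus "((\<lambda>z. 1 + 2 * (q' z * F z)) \<longlongrightarrow> 2 * b + 1) at_top" by (simp add: add.commute)
      show "\<forall>\<^sub>F x in at_top. 1 + 2 * (q' x * F x) =
          ((- (1 / q x) * (q x)^2 - F x * (of_nat 2 * (q' x * q x ^ (2 - Suc 0)))) / ((q x)^2 * (q x)^2))
            / (- (1 / (q x)^3))"
        using eventually_ge_at_top[of a]
      proof eventually_elim
        case (elim x)
        have qx: "q x \<noteq> 0" using hq[of x] elim by simp
        thus ?case by (simp add: field_simps power2_eq_square power3_eq_cube)
      qed
    qed
  qed
  have part3': "((\<lambda>z. F z / ((q z)^2 * G z)) \<longlongrightarrow> 2 * b + 1) at_top"
    using part3 by (simp add: divide_divide_eq_left)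
  show ?thesis using b0 part2 part3' unfolding F_def G_def by blast
qed

end
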